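(* Let $p\in(1,\infty)$ be such that $\gamma_{p,w}:=\gamma\, n^{1/p}(w_{\max}/w_{\min})^{1/p}<1$, let $Q^*_\lambda$ be the unique fixed point of $F_\lambda$, and let \[\bar\theta:=\arg\min_{\theta\in\mathbb{R}^d}\|Q_\theta-Q^*_\lambda\|_{p,w},\qquad \theta^*_p:=\arg\min_{\theta\in\mathbb{R}^d}f_p(\theta),\] where $f_p(\theta)=\frac1p\|F_\lambda(\Phi\theta)-\Phi\theta\|_{p,w}^p$. Then \[ \|Q_{\bar\theta}-Q_{\theta^*_p}\|_{p,w}\le\left(1+\frac{1+\gamma_{p,w}}{1-\gamma_{p,w}}\right)\min_{\theta\in\mathbb{R}^d}\|Q_\theta-Q^*_\lambda\|_{p,w}. \]
   Context: Finite discounted MDP with state space $\mathcal S$, action space $\mathcal A$, transition probabilities $P(s'\mid s,a)$, expected reward $R(s,a)$, discount $\gamma\in[0,1)$; $n=|\mathcal S||\mathcal A|$ and Q-functions are vectors in $\mathbb{R}^n$ indexed by $(s,a)$. For $\lambda>0$, $(F_\lambda Q)(s,a) := R(s,a)+\gamma\sum_{s'}P(s'\mid s,a)\,\lambda\ln\big(\sum_{u\in\mathcal A}\exp(Q(s',u)/\lambda)\big)$. Weights $w_i>0$ with $\sum_i w_i=1$, $\|x\|_{p,w}=(\sum_i w_i|x_i|^p)^{1/p}$, $w_{\min}=\min_i w_i$, $w_{\max}=\max_i w_i$. $\Phi\in\mathbb{R}^{n\times d}$ is a full-rank feature matrix and $Q_\theta=\Phi\theta$. When $\gamma_{p,w}<1$,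 $F_\lambda$ is a contraction in $\|\cdot\|_{p,w}$ with unique fixed point $Q^*_\lambda$. *)

theory Defs
  imports "HOL-Analysis.Analysis"
begin

definition pw_norm :: "real \<Rightarrow> ('i::finite \<Rightarrow> real) \<Rightarrow> ('i \<Rightarrow> real) \<Rightarrow> real" where
  "pw_norm p w x = (\<Sum>i\<in>UNIV. w i * \<bar>x i\<bar> powr p) powr (1 / p)"

definition soft_bellman ::
  "('s::finite \<Rightarrow> 'a::finite \<Rightarrow> 's \<Rightarrow> real) \<Rightarrow> ('s \<Rightarrow> 'a \<Rightarrow> real) \<Rightarrow> real \<Rightarrow> real
    \<Rightarrow> ('s \<times> 'a \<Rightarrow> real) \<Rightarrow> ('s \<times> 'a \<Rightarrow> real)" where
  "soft_bellman P R \<gamma> lam Q = (\<lambda>(s, a). R s a + \<gamma> * (\<Sum>s'\<in>UNIV. P s a s' *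
       (lam * ln (\<Sum>u\<in>UNIV. exp (Q (s', u) / lam)))))"

definition Qlin :: "('i::finite \<Rightarrow> 'd::finite \<Rightarrow> real) \<Rightarrow> ('d \<Rightarrow> real) \<Rightarrow> ('i \<Rightarrow> real)" where
  "Qlin \<Phi> \<theta> = (\<lambda>i. \<Sum>j\<in>UNIV. \<Phi> i j * \<theta> j)"

definition gamma_pw :: "real \<Rightarrow> real \<Rightarrow> ('i::finite \<Rightarrow> real) \<Rightarrow> real" where
  "gamma_pw \<gamma> p w = \<gamma> * real CARD('i) powr (1 / p) * (Max (range w) / Min (range w)) powr (1 / p)"

definition f_p ::
  "('s::finite \<Rightarrow> 'a::finite \<Rightarrow> 's \<Rightarrow> real) \<Rightarrow> ('s \<Rightarrow> 'a \<Rightarrow> real) \<Rightarrow> real \<Rightarrow> real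
    \<Rightarrow> real \<Rightarrow> ('s \<times> 'a \<Rightarrow> real) \<Rightarrow> ('s \<times> 'a \<Rightarrow> 'd::finite \<Rightarrow> real) \<Rightarrow> ('d \<Rightarrow> real) \<Rightarrow> real" where
  "f_p P R \<gamma> lam p w \<Phi> \<theta> =
     (1 / p) * pw_norm p w (\<lambda>i. soft_bellman P R \<gamma> lam (Qlin \<Phi> \<theta>) i - Qlin \<Phi> \<theta> i) powr p"

end

theory Submission
  imports Defs
begin

lemma powr_convex0:
  fixes a b t p :: real
  assumes "0 \<le> a" "0 \<le> b" "0 \<le> t" "t \<le> 1" "1 \<le> p"
  shows "((1-t)*a + t*b) powr p \<le> (1-t)*a powr p + t * b powr p"
proof (cases "a = 0 \<or> b = 0")
  case True
  have k: "c * z powr p \<le> c' * z powr p" if "0\<le>z" "0 \<le> c" "c \<le> 1" "c' = c" for c c' z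
    using that by simp
  have tp: "c powr p \<le> c" if "0 \<le> c" "c \<le> 1" for c :: real
    using that assms(5) powr_mono' [of 1 p c] by (cases "c = 0") auto
  show ?thesis
  proof (cases "a = 0")
    case True
    then have "((1-t)*a + t*b) powr p = t powr p * b powr p" using assms by (simp add: powr_mult)
    also have "\<dots> \<le> t * b powr p" using tp[of t] assms by (intro mult_right_mono) auto
    finally show ?thesis using True assms by simp
  next
    case False
    then have b0: "b = 0" using True by simp
    then have "((1-t)*a + t*b) powr p = (1-t) powr p * a powr p" using assms by (simp add: powr_mult)
    also have "\<dots> \<le> (1-t) * a powr p" using tp[of "1-t"] assms by (intro mult_right_mono) auto
    finally show ?thesis using b0 assms by simp
  qed
next
  case False
  then have "a \<in> {0<..}" "b \<in> {0<..}" using assms by auto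
  from convex_onD[OF powr_convex[OF assms(5)], OF assms(3,4) this]
  show ?thesis by simp
qed

lemma pw_norm_nonneg: "0 \<le> pw_norm p w x"
  by (simp add: pw_norm_def)

lemma pw_S_nonneg:
  fixes w x :: "'i::finite \<Rightarrow> real"
  assumes "\<And>i. w i > 0"
  shows "0 \<le> (\<Sum>i\<in>UNIV. w i * \<bar>x i\<bar> powr p)"
  using assms by (intro sum_nonneg mult_nonneg_nonneg) (auto intro: less_imp_le)

lemma pw_norm_powr:
  fixes w x :: "'i::finite \<Rightarrow> real"
  assumes "\<And>i. w i > 0" "p > 0"
  shows "pw_norm p w x powr p = (\<Sum>i\<in>UNIV. w i * \<bar>x i\<bar> powr p)"
  using pw_S_nonneg[where w=w, OF assms(1)] assms(2) unfolding pw_norm_def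
  by (simp add: powr_powr)

lemma pw_zero:
  fixes w x :: "'i::finite \<Rightarrow> real"
  assumes "\<And>i. w i > 0" "pw_norm p w x = 0"
  shows "x i = 0"
proof -
  have "(\<Sum>i\<in>UNIV. w i * \<bar>x i\<bar> powr p) = 0"
    using assms(2) pw_S_nonneg[where w=w and x=x and p=p, OF assms(1)] unfolding pw_norm_def by simp
  moreover have "\<forall>i\<in>UNIV. 0 \<le> w i * \<bar>x i\<bar> powr p"
    using assms(1) by (metis less_imp_le mult_nonneg_nonneg powr_ge_zero)
  ultimately have "\<forall>i\<in>UNIV. w i * \<bar>x i\<bar> powr p = 0"
    using sum_nonneg_eq_0_iff[of UNIV "\<lambda>i. w i * \<bar>x i\<bar> powr p"] by simp
  then have "w i * \<bar>x i\<bar> powr p = 0" by simp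
  then show ?thesis using assms(1)[of i] by simp
qed

lemma pw_triangle:
  fixes w x y :: "'i::finite \<Rightarrow> real"
  assumes w: "\<And>i. w i > 0" and p: "1 \<le> p"
  shows "pw_norm p w (\<lambda>i. x i + y i) \<le> pw_norm p w x + pw_norm p w y"
proof (cases "pw_norm p w x = 0 \<or> pw_norm p w y = 0")
  case True
  then show ?thesis
  proof
    assume "pw_norm p w x = 0"
    then have "\<And>i. x i = 0" using pw_zero[where w=w, OF w] by blast
    then show ?thesis by (simp add: pw_norm_nonneg)
  next
    assume "pw_norm p w y = 0"
    then have "\<And>i. y i = 0" using pw_zero[where w=w, OF w] by blast
    then show ?thesis by (simp add: pw_norm_nonneg)
  qed
next
  case False
  define A where "A = pw_norm p w x"
  define B where "B = pw_norm p w y"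
  have A: "A > 0" and B: "B > 0" using False pw_norm_nonneg[of p w] unfolding A_def B_def
    by (metis less_eq_real_def)+
  define t where "t = B / (A + B)"
  have t0: "0 \<le> t" "t \<le> 1" using A B by (auto simp: t_def)
  have 1: "1 - t = A / (A+B)" using A B by (simp add: t_def field_simps)
  have pt: "(\<bar>x i + y i\<bar> / (A+B)) powr p \<le> (1-t) * (\<bar>x i\<bar>/A) powr p + t * (\<bar>y i\<bar>/B) powr p" for i
  proof -
    have "\<bar>x i + y i\<bar> / (A+B) \<le> (1-t) * (\<bar>x i\<bar>/A) + t * (\<bar>y i\<bar>/B)"
    proof -
      have e1: "(1-t) * (\<bar>x i\<bar>/A) = \<bar>x i\<bar>/(A+B)" using A B unfolding 1 by simp
      have e2: "t * (\<bar>y i\<bar>/B) = \<bar>y i\<bar>/(A+B)" using A B unfolding t_def by simp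
      have "\<bar>x i + y i\<bar> / (A+B) \<le> (\<bar>x i\<bar> + \<bar>y i\<bar>)/(A+B)"
        using A B by (intro divide_right_mono abs_triangle_ineq) auto
      then show ?thesis unfolding e1 e2 by (simp add: add_divide_distrib)
    qed
    then have "(\<bar>x i + y i\<bar> / (A+B)) powr p \<le> ((1-t) * (\<bar>x i\<bar>/A) + t * (\<bar>y i\<bar>/B)) powr p"
      using p A B by (intro powr_mono2) auto
    also have "\<dots> \<le> (1-t) * (\<bar>x i\<bar>/A) powr p + t * (\<bar>y i\<bar>/B) powr p"
      using A B t0 p by (intro powr_convex0) auto
    finally show ?thesis .
  qed
  have "(\<Sum>i\<in>UNIV. w i * (\<bar>x i + y i\<bar> / (A+B)) powr p)
      \<le> (\<Sum>i\<in>UNIV. w i * ((1-t) * (\<bar>x i\<bar>/A) powr p + t * (\<bar>y i\<bar>/B) powr p))"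
    using w pt by (intro sum_mono mult_left_mono) (auto intro: less_imp_le)
  also have "\<dots> = (1-t) * ((\<Sum>i\<in>UNIV. w i * \<bar>x i\<bar> powr p) / A powr p)
       + t * ((\<Sum>i\<in>UNIV. w i * \<bar>y i\<bar> powr p) / B powr p)"
    using A B by (simp add: powr_divide sum_distrib_left sum_divide_distrib sum.distrib algebra_simps)
  also have "\<dots> = 1"
  proof -
    have ax: "(\<Sum>i\<in>UNIV. w i * \<bar>x i\<bar> powr p) / A powr p = 1"
      using pw_norm_powr[where w=w and p=p and x=x, OF w] p A unfolding A_def[symmetric]
      by (metis divide_self_if less_irrefl powr_gt_zero less_le_trans zero_less_one)
    have ay: "(\<Sum>i\<in>UNIV. w i * \<bar>y i\<bar> powr p) / B powr p = 1"
      using pw_norm_powr[where w=w and p=p and x=y, OF w] p B unfolding B_def[symmetric]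
      by (metis divide_self_if less_irrefl powr_gt_zero less_le_trans zero_less_one)
    show ?thesis unfolding ax ay by simp
  qed
  finally have "(\<Sum>i\<in>UNIV. w i * \<bar>x i + y i\<bar> powr p) / (A+B) powr p \<le> 1"
    using A B by (simp add: powr_divide sum_divide_distrib)
  then have S: "(\<Sum>i\<in>UNIV. w i * \<bar>x i + y i\<bar> powr p) \<le> (A+B) powr p"
    using A B by (simp add: divide_le_eq)
  have "pw_norm p w (\<lambda>i. x i + y i) \<le> ((A+B) powr p) powr (1/p)"
    unfolding pw_norm_def using p pw_S_nonneg[where w=w, OF w] S by (intro powr_mono2) auto
  also have "\<dots> = A + B" using A B p by (simp add: powr_powr)
  finally show ?thesis unfolding A_def B_def .
qed

lemma pw_tri2:
  fixes w x y z :: "'i::finite \<Rightarrow> real"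
  assumes w: "\<And>i. w i > 0" and p: "1 \<le> p"
  shows "pw_norm p w (\<lambda>i. x i - z i) \<le> pw_norm p w (\<lambda>i. x i - y i) + pw_norm p w (\<lambda>i. y i - z i)"
proof -
  have e: "(\<lambda>i. x i - z i) = (\<lambda>i. (x i - y i) + (y i - z i))" by auto
  show ?thesis unfolding e by (rule pw_triangle[OF w p])
qed

lemma pw_minus:
  "pw_norm p w (\<lambda>i. x i - y i) = pw_norm p w (\<lambda>i. y i - x i)"
  unfolding pw_norm_def by (simp add: abs_minus_commute)

lemma pw_mono:
  fixes w x y :: "'i::finite \<Rightarrow> real"
  assumes w: "\<And>i. w i > 0" and p: "0 < p" and le: "\<And>i. \<bar>x i\<bar> \<le> \<bar>y i\<bar>"
  shows "pw_norm p w x \<le> pw_norm p w y"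
  unfolding pw_norm_def
proof (rule powr_mono2)
  show "(\<Sum>i\<in>UNIV. w i * \<bar>x i\<bar> powr p) \<le> (\<Sum>i\<in>UNIV. w i * \<bar>y i\<bar> powr p)"
    using w le p by (intro sum_mono mult_left_mono powr_mono2) (auto intro: less_imp_le)
qed (use p pw_S_nonneg[where w=w and x=x, OF w] in auto)

lemma pw_const:
  fixes w :: "'i::finite \<Rightarrow> real"
  assumes ws: "(\<Sum>i\<in>UNIV. w i) = 1" and p: "0 < p" and c: "0 \<le> c"
  shows "pw_norm p w (\<lambda>i. c) = c"
proof -
  have "(\<Sum>i\<in>UNIV. w i * \<bar>c\<bar> powr p) = c powr p"
    using ws c by (simp add: sum_distrib_right[symmetric])
  then show ?thesis unfolding pw_norm_def using p c by (simp add: powr_powr)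
qed

lemma pw_bound:
  fixes w x :: "'i::finite \<Rightarrow> real"
  assumes w: "\<And>i. w i > 0" and p: "0 < p"
  shows "\<bar>x j\<bar> \<le> pw_norm p w x * (1 / Min (range w)) powr (1/p)"
proof -
  define m where "m = Min (range w)"
  have fin: "finite (range w)" by simp
  have m0: "m > 0" unfolding m_def using Min_in[OF fin] w by auto
  have mj: "m \<le> w j" unfolding m_def using Min_le[OF fin] by auto
  define S where "S = (\<Sum>i\<in>UNIV. w i * \<bar>x i\<bar> powr p)"
  have "w j * \<bar>x j\<bar> powr p \<le> S" unfolding S_def
    using w by (intro member_le_sum) (auto, metis less_imp_le mult_nonneg_nonneg powr_ge_zero)
  moreover have "m * \<bar>x j\<bar> powr p \<le> w j * \<bar>x j\<bar> powr p"
    using mj by (intro mult_right_mono) auto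
  ultimately have "\<bar>x j\<bar> powr p \<le> S * (1/m)"
    using m0 by (simp add: field_simps)
  then have "(\<bar>x j\<bar> powr p) powr (1/p) \<le> (S * (1/m)) powr (1/p)"
    using p by (intro powr_mono2) auto
  also have "\<dots> = S powr (1/p) * (1/m) powr (1/p)"
    using m0 pw_S_nonneg[where w=w and x=x and p=p, OF w] unfolding S_def by (intro powr_mult)
  finally show ?thesis using p unfolding pw_norm_def S_def m_def by (simp add: powr_powr)
qed

lemma lse_le:
  fixes a b :: "'u::finite \<Rightarrow> real"
  assumes lam: "lam > 0" and le: "\<And>u. a u \<le> b u + K"
  shows "lam * ln (\<Sum>u\<in>UNIV. exp (a u / lam)) \<le> lam * ln (\<Sum>u\<in>UNIV. exp (b u / lam)) + K"
proof -
  have pos: "0 < (\<Sum>u\<in>UNIV. exp (c u / lam))" for c :: "'u \<Rightarrow> real"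
    by (intro sum_pos) auto
  have "(\<Sum>u\<in>UNIV. exp (a u / lam)) \<le> (\<Sum>u\<in>UNIV. exp ((b u + K) / lam))"
    using le lam by (intro sum_mono) (auto intro: divide_right_mono)
  also have "\<dots> = exp (K / lam) * (\<Sum>u\<in>UNIV. exp (b u / lam))"
    by (simp add: sum_distrib_left add_divide_distrib exp_add mult.commute)
  finally have "ln (\<Sum>u\<in>UNIV. exp (a u / lam)) \<le> ln (exp (K / lam) * (\<Sum>u\<in>UNIV. exp (b u / lam)))"
    using pos by (subst ln_le_cancel_iff) auto
  also have "\<dots> = K / lam + ln (\<Sum>u\<in>UNIV. exp (b u / lam))"
    using pos[of b] by (simp add: ln_mult)
  finally have "lam * ln (\<Sum>u\<in>UNIV. exp (a u / lam)) \<le> lam * (K / lam + ln (\<Sum>u\<in>UNIV. exp (b u / lam)))"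
    using lam by (intro mult_left_mono) auto
  then show ?thesis using lam by (simp add: algebra_simps)
qed

lemma lse_abs:
  fixes a b :: "'u::finite \<Rightarrow> real"
  assumes lam: "lam > 0" and le: "\<And>u. \<bar>a u - b u\<bar> \<le> K"
  shows "\<bar>lam * ln (\<Sum>u\<in>UNIV. exp (a u / lam)) - lam * ln (\<Sum>u\<in>UNIV. exp (b u / lam))\<bar> \<le> K"
proof -
  have "a u \<le> b u + K" "b u \<le> a u + K" for u using le[of u] by auto
  then show ?thesis using lse_le[of lam a b K] lse_le[of lam b a K] lam by fastforce
qed

lemma sb_pointwise:
  fixes P :: "'s::finite \<Rightarrow> 'a::finite \<Rightarrow> 's \<Rightarrow> real"
  assumes P_nonneg: "\<And>s a s'. P s a s' \<ge> 0"
    and P_sum: "\<And>s a. (\<Sum>s'\<in>UNIV. P s a s') = 1"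
    and gamma: "0 \<le> \<gamma>" and lam: "lam > 0"
    and K: "\<And>i. \<bar>Q1 i - Q2 i\<bar> \<le> K"
  shows "\<bar>soft_bellman P R \<gamma> lam Q1 i - soft_bellman P R \<gamma> lam Q2 i\<bar> \<le> \<gamma> * K"
proof -
  obtain s a where i: "i = (s, a)" by fastforce
  define L where "L Q s' = lam * ln (\<Sum>u\<in>UNIV. exp (Q (s', u) / lam))" for Q :: "'s \<times> 'a \<Rightarrow> real" and s' :: 's
  have d: "soft_bellman P R \<gamma> lam Q1 i - soft_bellman P R \<gamma> lam Q2 i
      = \<gamma> * (\<Sum>s'\<in>UNIV. P s a s' * (L Q1 s' - L Q2 s'))"
    unfolding soft_bellman_def i L_def by (simp add: algebra_simps sum_subtractf)
  have Ls: "\<bar>L Q1 s' - L Q2 s'\<bar> \<le> K" for s'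
    unfolding L_def by (rule lse_abs[OF lam]) (use K in auto)
  have "\<bar>\<Sum>s'\<in>UNIV. P s a s' * (L Q1 s' - L Q2 s')\<bar> \<le> (\<Sum>s'\<in>UNIV. \<bar>P s a s' * (L Q1 s' - L Q2 s')\<bar>)"
    by (rule sum_abs)
  also have "\<dots> \<le> (\<Sum>s'\<in>UNIV. P s a s' * K)"
    using P_nonneg Ls by (intro sum_mono) (simp add: abs_mult mult_left_mono)
  also have "\<dots> = K" using P_sum by (simp add: sum_distrib_right[symmetric])
  finally show ?thesis unfolding d using gamma by (simp add: abs_mult mult_left_mono)
qed

lemma sb_contr:
  fixes P :: "'s::finite \<Rightarrow> 'a::finite \<Rightarrow> 's \<Rightarrow> real"
    and w Q1 Q2 :: "'s \<times> 'a \<Rightarrow> real"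
  assumes P_nonneg: "\<And>s a s'. P s a s' \<ge> 0"
    and P_sum: "\<And>s a. (\<Sum>s'\<in>UNIV. P s a s') = 1"
    and gamma: "0 \<le> \<gamma>" and lam: "lam > 0"
    and w: "\<And>i. w i > 0" and ws: "(\<Sum>i\<in>UNIV. w i) = 1" and p: "0 < p"
  shows "pw_norm p w (\<lambda>i. soft_bellman P R \<gamma> lam Q1 i - soft_bellman P R \<gamma> lam Q2 i)
     \<le> gamma_pw \<gamma> p w * pw_norm p w (\<lambda>i. Q1 i - Q2 i)"
proof -
  define m where "m = Min (range w)"
  define M where "M = Max (range w)"
  have fin: "finite (range w)" by simp
  have m0: "m > 0" unfolding m_def using Min_in[OF fin] w by auto
  have Mi: "w i \<le> M" for i unfolding M_def using Max_ge[OF fin] by auto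
  have nM: "1 \<le> real CARD('s \<times> 'a) * M"
  proof -
    have "1 = (\<Sum>i\<in>UNIV. w i)" using ws by simp
    also have "\<dots> \<le> (\<Sum>i\<in>(UNIV::('s\<times>'a) set). M)" using Mi by (intro sum_mono) auto
    finally show ?thesis by simp
  qed
  define D where "D = pw_norm p w (\<lambda>i. Q1 i - Q2 i)"
  define K where "K = D * (1 / m) powr (1/p)"
  have D0: "0 \<le> D" unfolding D_def by (rule pw_norm_nonneg)
  have K0: "0 \<le> K" unfolding K_def using D0 by simp
  have Kb: "\<bar>Q1 i - Q2 i\<bar> \<le> K" for i
    using pw_bound[where w=w and x="\<lambda>i. Q1 i - Q2 i" and j=i, OF w p] unfolding K_def D_def m_def by simp
  have "pw_norm p w (\<lambda>i. soft_bellman P R \<gamma> lam Q1 i - soft_bellman P R \<gamma> lam Q2 i)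
      \<le> pw_norm p w (\<lambda>i. \<gamma> * K)"
    using sb_pointwise[OF P_nonneg P_sum gamma lam Kb] gamma K0
    by (intro pw_mono[OF w p]) simp
  also have "\<dots> = \<gamma> * K" using ws p gamma K0 by (intro pw_const) auto
  also have "\<dots> \<le> gamma_pw \<gamma> p w * D"
  proof -
    have "(1/m) powr (1/p) \<le> (real CARD('s \<times> 'a) * M / m) powr (1/p)"
      using nM m0 p by (intro powr_mono2) (auto simp: divide_right_mono)
    also have "\<dots> = real CARD('s \<times> 'a) powr (1/p) * (M / m) powr (1/p)"
      using m0 Mi[of undefined] w[of undefined] by (simp add: powr_mult[symmetric])
    finally have "(1/m) powr (1/p) \<le> real CARD('s \<times> 'a) powr (1/p) * (M / m) powr (1/p)" .
    then have "\<gamma> * (D * (1/m) powr (1/p)) \<le> \<gamma> * (D * (real CARD('s \<times> 'a) powr (1/p) * (M / m) powr (1/p)))"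
      using gamma D0 by (intro mult_left_mono) auto
    then show ?thesis unfolding K_def gamma_pw_def m_def M_def by (simp add: algebra_simps)
  qed
  finally show ?thesis unfolding D_def .
qed

theorem theorem2:
  fixes P :: "'s::finite \<Rightarrow> 'a::finite \<Rightarrow> 's \<Rightarrow> real"
    and R :: "'s \<Rightarrow> 'a \<Rightarrow> real"
    and \<gamma> lam p :: real
    and w :: "'s \<times> 'a \<Rightarrow> real"
    and \<Phi> :: "'s \<times> 'a \<Rightarrow> 'd::finite \<Rightarrow> real"
    and Qstar :: "'s \<times> 'a \<Rightarrow> real"
    and \<theta>bar \<theta>p :: "'d \<Rightarrow> real"
  assumes P_nonneg: "\<And>s a s'. P s a s' \<ge> 0"
    and P_sum: "\<And>s a. (\<Sum>s'\<in>UNIV. P s a s') = 1"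
    and gamma: "0 \<le> \<gamma>" "\<gamma> < 1"
    and lambda: "lam > 0"
    and w_pos: "\<And>i. w i > 0"
    and w_sum: "(\<Sum>i\<in>UNIV. w i) = 1"
    and full_rank: "inj (Qlin \<Phi>)"
    and p: "1 < p"
    and contr: "gamma_pw \<gamma> p w < 1"
    and fixpt: "soft_bellman P R \<gamma> lam Qstar = Qstar"
    and \<theta>bar_min: "\<And>\<theta>. pw_norm p w (\<lambda>i. Qlin \<Phi> \<theta>bar i - Qstar i)
                           \<le> pw_norm p w (\<lambda>i. Qlin \<Phi> \<theta> i - Qstar i)"
    and \<theta>p_min: "\<And>\<theta>. f_p P R \<gamma> lam p w \<Phi> \<theta>p \<le> f_p P R \<gamma> lam p w \<Phi> \<theta>"
  shows "pw_norm p w (\<lambda>i. Qlin \<Phi> \<theta>bar i - Qlin \<Phi> \<theta>p i)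
           \<le> (1 + (1 + gamma_pw \<gamma> p w) / (1 - gamma_pw \<gamma> p w))
              * (INF \<theta>. pw_norm p w (\<lambda>i. Qlin \<Phi> \<theta> i - Qstar i))"
  proof -
  let ?N = "pw_norm p w"
  let ?Q = "Qlin \<Phi>"
  let ?F = "soft_bellman P R \<gamma> lam"
  define g where "g = gamma_pw \<gamma> p w"
  have p0: "0 < p" and p1: "1 \<le> p" using p by auto
  have g0: "0 \<le> g" unfolding g_def gamma_pw_def using gamma by simp
  have g1: "g < 1" using contr unfolding g_def .
  have contrF: "?N (\<lambda>i. ?F Q1 i - ?F Q2 i) \<le> g * ?N (\<lambda>i. Q1 i - Q2 i)" for Q1 Q2
    unfolding g_def by (rule sb_contr[OF P_nonneg P_sum gamma(1) lambda w_pos w_sum p0])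
  have fixi: "?F Qstar i = Qstar i" for i using fixpt by simp
  define res where "res \<theta> = ?N (\<lambda>i. ?F (?Q \<theta>) i - ?Q \<theta> i)" for \<theta>
  define E where "E \<theta> = ?N (\<lambda>i. ?Q \<theta> i - Qstar i)" for \<theta>
  have a: "res \<theta> \<le> (1 + g) * E \<theta>" for \<theta>
  proof -
    have t: "res \<theta> \<le> ?N (\<lambda>i. ?F (?Q \<theta>) i - ?F Qstar i) + ?N (\<lambda>i. ?F Qstar i - ?Q \<theta> i)"
      unfolding res_def by (rule pw_tri2[OF w_pos p1])
    have c1: "?N (\<lambda>i. ?F (?Q \<theta>) i - ?F Qstar i) \<le> g * E \<theta>"
      using contrF[of "?Q \<theta>" Qstar] unfolding E_def .
    have c2: "?N (\<lambda>i. ?F Qstar i - ?Q \<theta> i) = E \<theta>"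
      unfolding E_def fixi by (rule pw_minus)
    show ?thesis using t c1 c2 by (simp add: algebra_simps)
  qed
  have b: "E \<theta> \<le> res \<theta> / (1 - g)" for \<theta>
  proof -
    have t: "E \<theta> \<le> ?N (\<lambda>i. ?Q \<theta> i - ?F (?Q \<theta>) i) + ?N (\<lambda>i. ?F (?Q \<theta>) i - Qstar i)"
      unfolding E_def by (rule pw_tri2[OF w_pos p1])
    have c1: "?N (\<lambda>i. ?F (?Q \<theta>) i - Qstar i) \<le> g * E \<theta>"
      using contrF[of "?Q \<theta>" Qstar] unfolding E_def fixi .
    have c2: "?N (\<lambda>i. ?Q \<theta> i - ?F (?Q \<theta>) i) = res \<theta>"
      unfolding res_def by (rule pw_minus)
    have "(1 - g) * E \<theta> \<le> res \<theta>" using t c1 c2 by (simp add: algebra_simps)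
    then show ?thesis using g1 by (simp add: pos_le_divide_eq mult.commute)
  qed
  have fp: "f_p P R \<gamma> lam p w \<Phi> \<theta> = (1/p) * res \<theta> powr p" for \<theta>
    unfolding f_p_def res_def by (rule refl)
  have c: "res \<theta>p \<le> res \<theta>bar"
  proof (rule ccontr)
    assume "\<not> ?thesis"
    then have "res \<theta>bar powr p < res \<theta>p powr p"
      using p0 by (intro powr_less_mono2) (auto simp: res_def pw_norm_nonneg)
    then have "(1/p) * res \<theta>bar powr p < (1/p) * res \<theta>p powr p"
      using p0 by (intro mult_strict_left_mono) auto
    then show False using \<theta>p_min[of \<theta>bar] unfolding fp by linarith
  qed
  have INF: "(INF \<theta>. E \<theta>) = E \<theta>bar"
  proof (rule antisym)
    show "(INF \<theta>. E \<theta>) \<le> E \<theta>bar"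
      by (rule cINF_lower) (auto simp: bdd_below_def E_def intro: pw_norm_nonneg)
    show "E \<theta>bar \<le> (INF \<theta>. E \<theta>)"
      by (rule cINF_greatest) (auto simp: E_def \<theta>bar_min)
  qed
  have E0: "0 \<le> E \<theta>bar" unfolding E_def by (rule pw_norm_nonneg)
  have "?N (\<lambda>i. ?Q \<theta>bar i - ?Q \<theta>p i) \<le> E \<theta>bar + ?N (\<lambda>i. Qstar i - ?Q \<theta>p i)"
    unfolding E_def by (rule pw_tri2[OF w_pos p1])
  also have "\<dots> = E \<theta>bar + E \<theta>p" unfolding E_def by (subst pw_minus) (rule refl)
  also have "\<dots> \<le> E \<theta>bar + res \<theta>bar / (1 - g)"
    using b[of \<theta>p] c g1 by (smt (verit) divide_right_mono)
  also have "\<dots> \<le> E \<theta>bar + (1 + g) * E \<theta>bar / (1 - g)"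
    using a[of \<theta>bar] g1 by (smt (verit) divide_right_mono)
  also have "\<dots> = (1 + (1 + g) / (1 - g)) * E \<theta>bar"
    using g1 by (simp add: field_simps)
  finally have fin: "?N (\<lambda>i. ?Q \<theta>bar i - ?Q \<theta>p i) \<le> (1 + (1 + g) / (1 - g)) * E \<theta>bar" .
  have INF': "(INF \<theta>. ?N (\<lambda>i. ?Q \<theta> i - Qstar i)) = E \<theta>bar"
    using INF unfolding E_def .
  show ?thesis unfolding INF' using fin unfolding g_def .
qed

end
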